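(* Consider the setting in the context with $\rho>0$, symmetric $P_i,Q_i\in\mathbb{R}^{n\times n}$, and let $(\check{\bm{W}}^*,\hat{\bm{W}}^*,\lambda^* )$ be a KKT point of (P1), $\bm{Z}^*=(\check{\bm{W}}^*,\hat{\bm{W}}^* )$. If $\bm{G}_1^{\dagger}\succ0$, $\bm{G}_2\succ\bm{G}_3$, $0<\gamma<2$ and $\lambda^0=\bm{0}$, then for every $k\ge1$ $$\bm{F}(\overline{\bm{Z}}^k)-\bm{F}(\bm{Z}^* )\le\frac1{2k}\Big(\|\check{\bm{W}}^0-\check{\bm{W}}^*\|^2_{\bm{G}_1^{\dagger}}+\|\hat{\bm{W}}^0-\hat{\bm{W}}^*\|^2_{\bm{G}_2}\Big),\qquad \overline{\bm{Z}}^k=\frac1k\sum_{j=1}^k\bm{Z}^j,$$ where $\bm{Z}^j=(\check{\bm{W}}^j,\hat{\bm{W}}^j)$ are the iterates of the algorithm.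
   Context: Let $\mathcal{G}=(\mathcal{V},\mathcal{E})$ be a connected undirected graph with $\mathcal{V}=\{1,\dots,N\}$, $N\ge 2$, and let $d_i$ be the degree of $i$. Variables are $\check{\bm{w}}_i,\hat{\bm{w}}_i\in\mathbb{R}^n$; write $\check{\bm{W}}=(\check{\bm{w}}_1,\dots,\check{\bm{w}}_N)$, $\hat{\bm{W}}$ likewise, $\bm{z}_i=(\check{\bm{w}}_i,\hat{\bm{w}}_i)$, $\bm{Z}=(\check{\bm{W}},\hat{\bm{W}})$. The matrix $\bm{A}\in\mathbb{R}^{|\mathcal{E}|n\times Nn}$ has one block row per edge $\{i,j\}$ ($i<j$) with $I_n$ in block column $i$, $-I_n$ in block column $j$, zeros elsewhere; $A_i$ is its $i$-th block column, so $A_i^TA_i=d_iI_n$. Each $f_i:\mathbb{R}^n\times\mathbb{R}^n\to\mathbb{R}$ is differentiable, jointly convex, with $\nabla f_i$ Lipschitz with constant $C_i$. Let $\mu_1\ge0$, $\mu_2>0$, $F_i(\bm{z}_i)=f_i(\check{\bm{w}}_i,\hat{\bm{w}}_i)+\frac{\mu_1}{2}\|\check{\bm{w}}_i\|^2+\frac{\mu_2}{2}\|\hat{\bm{w}}_i\|^2$, $\bm{F}(\bm{Z})=\sum_iF_i(\bm{z}_i)$, and $m$ a constant with $0<m\le\mu_2$. Problem (P1): minimize $\bm{F}(\bm{Z})$ s.t. $\bm{A}\check{\bm{W}}=0$; a KKT point is $(\check{\bm{W}}^*,\hat{\bm{W}}^*,\lambda^* )$ with $\bm{A}\check{\bm{W}}^*=0$,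 $A_i^T\lambda^*=\nabla_{\check{\bm{w}}_i}F_i(\bm{z}_i^* )$, $\nabla_{\hat{\bm{w}}_i}F_i(\bm{z}_i^* )=0$. Algorithm: with $\mathcal{L}_\rho=\bm{F}(\bm{Z})-\lambda^T\bm{A}\check{\bm{W}}+\frac\rho2\|\bm{A}\check{\bm{W}}\|^2$, from arbitrary $\check{\bm{W}}^0,\hat{\bm{W}}^0$ and given $\lambda^0$, for $k=0,1,\dots$: (i) for all $i$ in parallel $\check{\bm{w}}_i^{k+1}=\arg\min_{\check{\bm{w}}_i}\mathcal{L}_\rho(\check{\bm{w}}_i,\check{\bm{W}}^k_{-i},\hat{\bm{W}}^k,\lambda^k)+\frac12\|\check{\bm{w}}_i-\check{\bm{w}}_i^k\|^2_{P_i}$; (ii) $\lambda^{k+1}=\lambda^k-\gamma\rho\bm{A}\check{\bm{W}}^{k+1}$; (iii) for all $i$ in parallel $\hat{\bm{w}}_i^{k+1}=\arg\min_{\hat{\bm{w}}_i}F_i(\check{\bm{w}}_i^{k+1},\hat{\bm{w}}_i)+\frac12\|\hat{\bm{w}}_i-\hat{\bm{w}}_i^k\|^2_{Q_i}$. Notation: $\|x\|^2_S=x^TSx$; $\bm{G}_1=\mathrm{blkdiag}(\rho d_iI_n+P_i)_i$, $\bm{G}_1^{\dagger}=\bm{G}_1-\rho\bm{A}^T\bm{A}$, $\bm{G}_2=\mathrm{blkdiag}(Q_i)_i$, $\bm{G}_3=\mathrm{blkdiag}\big(\frac{C_i}{m}(C_i+m)I_n\big)_i$. *)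

theory Defs
  imports "HOL-Analysis.Analysis"
begin

definition vset :: "nat \<Rightarrow> nat set" where
  "vset N = {1..N}"

definition graph_ok :: "nat \<Rightarrow> (nat \<times> nat) set \<Rightarrow> bool" where
  "graph_ok N E \<longleftrightarrow> (\<forall>(i,j)\<in>E. 1 \<le> i \<and> i < j \<and> j \<le> N)"

definition connected_graph :: "nat \<Rightarrow> (nat \<times> nat) set \<Rightarrow> bool" where
  "connected_graph N E \<longleftrightarrow> (\<forall>i\<in>vset N. \<forall>j\<in>vset N. (i,j) \<in> (E \<union> E\<inverse>)\<^sup>*)"

definition deg :: "(nat \<times> nat) set \<Rightarrow> nat \<Rightarrow> nat" where
  "deg E i = card {e\<in>E. fst e = i \<or> snd e = i}"

text \<open>Block of A*W for edge e=(i,j): w_i - w_j.\<close>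
definition Ablk :: "(nat \<Rightarrow> real^'n) \<Rightarrow> nat \<times> nat \<Rightarrow> real^'n" where
  "Ablk W e = W (fst e) - W (snd e)"

text \<open>i-th block of A^T lambda.\<close>
definition ATlam :: "(nat \<times> nat) set \<Rightarrow> (nat \<times> nat \<Rightarrow> real^'n) \<Rightarrow> nat \<Rightarrow> real^'n" where
  "ATlam E lam i = (\<Sum>e\<in>{e\<in>E. fst e = i}. lam e) - (\<Sum>e\<in>{e\<in>E. snd e = i}. lam e)"

definition wnorm2 :: "real^'n \<Rightarrow> real^'n^'n \<Rightarrow> real" where
  "wnorm2 x S = x \<bullet> (S *v x)"

definition Floc :: "real \<Rightarrow> real \<Rightarrow> (nat \<Rightarrow> (real^'n) \<times> (real^'n) \<Rightarrow> real) \<Rightarrow> nat \<Rightarrow> real^'n \<Rightarrow> real^'n \<Rightarrow> real" where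
  "Floc mu1 mu2 f i wc wh = f i (wc, wh) + mu1/2 * (norm wc)^2 + mu2/2 * (norm wh)^2"

definition Ftot :: "nat \<Rightarrow> real \<Rightarrow> real \<Rightarrow> (nat \<Rightarrow> (real^'n) \<times> (real^'n) \<Rightarrow> real) \<Rightarrow> (nat \<Rightarrow> real^'n) \<Rightarrow> (nat \<Rightarrow> real^'n) \<Rightarrow> real" where
  "Ftot N mu1 mu2 f Wc Wh = (\<Sum>i\<in>vset N. Floc mu1 mu2 f i (Wc i) (Wh i))"

definition Lrho :: "nat \<Rightarrow> (nat \<times> nat) set \<Rightarrow> real \<Rightarrow> real \<Rightarrow> (nat \<Rightarrow> (real^'n) \<times> (real^'n) \<Rightarrow> real) \<Rightarrow> real
   \<Rightarrow> (nat \<Rightarrow> real^'n) \<Rightarrow> (nat \<Rightarrow> real^'n) \<Rightarrow> (nat \<times> nat \<Rightarrow> real^'n) \<Rightarrow> real" where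
  "Lrho N E mu1 mu2 f rho Wc Wh lam =
     Ftot N mu1 mu2 f Wc Wh - (\<Sum>e\<in>E. lam e \<bullet> Ablk Wc e) + rho/2 * (\<Sum>e\<in>E. (norm (Ablk Wc e))^2)"

text \<open>Quadratic forms of the block matrices G1, G1dagger = G1 - rho A^T A, G2, G3.\<close>
definition G1_qf :: "nat \<Rightarrow> (nat \<times> nat) set \<Rightarrow> real \<Rightarrow> (nat \<Rightarrow> real^'n^'n) \<Rightarrow> (nat \<Rightarrow> real^'n) \<Rightarrow> real" where
  "G1_qf N E rho P W = (\<Sum>i\<in>vset N. rho * real (deg E i) * (norm (W i))^2 + wnorm2 (W i) (P i))"

definition G1dag_qf :: "nat \<Rightarrow> (nat \<times> nat) set \<Rightarrow> real \<Rightarrow> (nat \<Rightarrow> real^'n^'n) \<Rightarrow> (nat \<Rightarrow> real^'n) \<Rightarrow> real" where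
  "G1dag_qf N E rho P W = G1_qf N E rho P W - rho * (\<Sum>e\<in>E. (norm (Ablk W e))^2)"

definition G2_qf :: "nat \<Rightarrow> (nat \<Rightarrow> real^'n^'n) \<Rightarrow> (nat \<Rightarrow> real^'n) \<Rightarrow> real" where
  "G2_qf N Q W = (\<Sum>i\<in>vset N. wnorm2 (W i) (Q i))"

definition G3_qf :: "nat \<Rightarrow> (nat \<Rightarrow> real) \<Rightarrow> real \<Rightarrow> (nat \<Rightarrow> real^'n) \<Rightarrow> real" where
  "G3_qf N C m W = (\<Sum>i\<in>vset N. C i / m * (C i + m) * (norm (W i))^2)"

definition posdef_blk :: "nat \<Rightarrow> ((nat \<Rightarrow> real^'n) \<Rightarrow> real) \<Rightarrow> bool" where
  "posdef_blk N q \<longleftrightarrow> (\<forall>W. (\<exists>i\<in>vset N. W i \<noteq> 0) \<longrightarrow> q W > 0)"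

end

theory Submission
  imports Defs
begin



lemma grad_ineq:
  fixes f :: "'a::real_inner \<Rightarrow> real"
  assumes cv: "convex_on UNIV f" and d: "\<And>z. (f has_derivative (\<lambda>h. g z \<bullet> h)) (at z)"
  shows "f x + g x \<bullet> (y - x) \<le> f y"
proof -
  define \<phi> where "\<phi> t = f (x + t *\<^sub>R (y - x))" for t :: real
  have cphi: "convex_on UNIV \<phi>"
  proof (rule convex_onI)
    fix t a b :: real assume t: "0 < t" "t < 1"
    have "x + ((1 - t) *\<^sub>R a + t *\<^sub>R b) *\<^sub>R (y - x) = (1 - t) *\<^sub>R (x + a *\<^sub>R (y - x)) + t *\<^sub>R (x + b *\<^sub>R (y - x))"
      by (simp add: algebra_simps)
    then show "\<phi> ((1 - t) *\<^sub>R a + t *\<^sub>R b) \<le> (1 - t) * \<phi> a + t * \<phi> b"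
      unfolding \<phi>_def using convex_onD[OF cv, of t] t by simp
  qed simp
  have "((\<lambda>t. x + t *\<^sub>R (y - x)) has_derivative (\<lambda>t. t *\<^sub>R (y - x))) (at 0)"
    by (intro derivative_eq_intros) auto
  then have "(\<phi> has_derivative (\<lambda>t. g x \<bullet> (t *\<^sub>R (y - x)))) (at 0)"
    unfolding \<phi>_def using has_derivative_compose[OF _ d] by fastforce
  then have "(\<phi> has_field_derivative (g x \<bullet> (y - x))) (at 0 within UNIV)"
    unfolding has_field_derivative_def by (simp add: mult_commute_abs)
  from convex_on_imp_above_tangent[OF cphi _ _ _ this, of 1] have "\<phi> 1 - \<phi> 0 \<ge> g x \<bullet> (y - x)" by simp
  then show ?thesis unfolding \<phi>_def by simp
qed

lemma descent:
  fixes f :: "'a::real_inner \<Rightarrow> real"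
  assumes d: "\<And>z. (f has_derivative (\<lambda>h. g z \<bullet> h)) (at z)"
    and lip: "\<And>z z'. norm (g z - g z') \<le> C * norm (z - z')"
  shows "f y \<le> f x + g x \<bullet> (y - x) + C/2 * (norm (y - x))\<^sup>2"
proof -
  define dd where "dd = y - x"
  define h where "h t = f (x + t *\<^sub>R dd) - t * (g x \<bullet> dd) - C/2 * t^2 * (norm dd)^2" for t :: real
  have "h 0 \<ge> h 1"
  proof (rule DERIV_nonpos_imp_nonincreasing[of 0 1 h])
    fix t :: real assume t: "0 \<le> t" "t \<le> 1"
    have "((\<lambda>t. x + t *\<^sub>R dd) has_derivative (\<lambda>s. s *\<^sub>R dd)) (at t)"
      by (intro derivative_eq_intros) auto
    then have "((\<lambda>t. f (x + t *\<^sub>R dd)) has_derivative (\<lambda>s. g (x + t *\<^sub>R dd) \<bullet> (s *\<^sub>R dd))) (at t)"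
      using has_derivative_compose[OF _ d] by fastforce
    then have d1: "((\<lambda>t. f (x + t *\<^sub>R dd)) has_field_derivative (g (x + t *\<^sub>R dd) \<bullet> dd)) (at t)"
      unfolding has_field_derivative_def by (simp add: mult_commute_abs)
    have "(h has_field_derivative (g (x + t *\<^sub>R dd) \<bullet> dd - g x \<bullet> dd - C/2 * (2 * t) * (norm dd)^2)) (at t)"
      unfolding h_def by (rule derivative_eq_intros d1 | simp)+
    moreover have "g (x + t *\<^sub>R dd) \<bullet> dd - g x \<bullet> dd - C/2 * (2 * t) * (norm dd)^2 \<le> 0"
    proof -
      have "g (x + t *\<^sub>R dd) \<bullet> dd - g x \<bullet> dd = (g (x + t *\<^sub>R dd) - g x) \<bullet> dd" by (simp add: inner_diff_left)
      also have "\<dots> \<le> norm (g (x + t *\<^sub>R dd) - g x) * norm dd" by (rule norm_cauchy_schwarz)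
      also have "\<dots> \<le> C * norm (t *\<^sub>R dd) * norm dd"
        using lip[of "x + t *\<^sub>R dd" x] by (intro mult_right_mono) auto
      also have "\<dots> = C * t * (norm dd)^2" using t by (simp add: power2_eq_square)
      finally show ?thesis by simp
    qed
    ultimately show "\<exists>D. (h has_field_derivative D) (at t) \<and> D \<le> 0" by blast
  qed simp
  then show ?thesis unfolding h_def dd_def by simp
qed



lemma foc_zero:
  fixes \<phi> :: "'a::real_inner \<Rightarrow> real"
  assumes min: "\<And>w. \<phi> u \<le> \<phi> w" and d: "(\<phi> has_derivative (\<lambda>h. G \<bullet> h)) (at u)"
  shows "G = 0"
proof -
  have "(\<lambda>h. G \<bullet> h) = (\<lambda>h. 0)"
    by (rule has_derivative_local_min[OF d]) (simp add: min)
  then have "G \<bullet> G = 0" by metis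
  then show ?thesis by simp
qed

lemma d_normsq:
  fixes a u :: "'a::real_inner"
  shows "((\<lambda>w. (norm (w - a))^2) has_derivative (\<lambda>h. (2 *\<^sub>R (u - a)) \<bullet> h)) (at u)"
proof -
  have "((\<lambda>w. (w - a) \<bullet> (w - a)) has_derivative (\<lambda>h. (u - a) \<bullet> h + h \<bullet> (u - a))) (at u)"
    by (auto intro!: derivative_eq_intros)
  moreover have "(\<lambda>h. (u - a) \<bullet> h + h \<bullet> (u - a)) = (\<lambda>h. (2 *\<^sub>R (u - a)) \<bullet> h)"
    by (auto simp: fun_eq_iff inner_commute)
  ultimately show ?thesis by (simp add: power2_norm_eq_inner)
qed

lemma inner_mat_sym:
  fixes S :: "real^'n^'n"
  assumes "transpose S = S"
  shows "x \<bullet> (S *v y) = (S *v x) \<bullet> y"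
  by (metis assms dot_lmul_matrix vector_transpose_matrix)

lemma d_wnorm2:
  fixes S :: "real^'n^'n"
  assumes sym: "transpose S = S"
  shows "((\<lambda>w. wnorm2 (w - a) S) has_derivative (\<lambda>h. (2 *\<^sub>R (S *v (u - a))) \<bullet> h)) (at u)"
proof -
  have lin: "bounded_linear ((*v) S)" by simp
  have "((\<lambda>w. S *v (w - a)) has_derivative (\<lambda>h. S *v h)) (at u)"
  proof -
    have "((\<lambda>w. w - a) has_derivative (\<lambda>h. h)) (at u)" by (auto intro!: derivative_eq_intros)
    from bounded_linear.has_derivative[OF lin this] show ?thesis .
  qed
  then have "((\<lambda>w. (w - a) \<bullet> (S *v (w - a))) has_derivative (\<lambda>h. (u - a) \<bullet> (S *v h) + h \<bullet> (S *v (u - a)))) (at u)"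
    by (auto intro!: derivative_eq_intros)
  moreover have "(\<lambda>h. (u - a) \<bullet> (S *v h) + h \<bullet> (S *v (u - a))) = (\<lambda>h. (2 *\<^sub>R (S *v (u - a))) \<bullet> h)"
    by (auto simp: fun_eq_iff inner_commute inner_mat_sym[OF sym])
  ultimately show ?thesis by (simp add: wnorm2_def)
qed



lemma d_Floc_x:
  assumes d: "\<And>z. (f i has_derivative (\<lambda>h. gr z \<bullet> h)) (at z)"
  shows "((\<lambda>w. Floc mu1 mu2 f i w c) has_derivative (\<lambda>h. (fst (gr (u,c)) + mu1 *\<^sub>R u) \<bullet> h)) (at u)"
proof -
  have p: "((\<lambda>w. (w, c)) has_derivative (\<lambda>h. (h, 0))) (at u)" by (auto intro!: derivative_eq_intros)
  have "((\<lambda>w. f i (w, c)) has_derivative (\<lambda>h. gr (u,c) \<bullet> (h, 0))) (at u)"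
    using has_derivative_compose[OF p d] by simp
  then have a: "((\<lambda>w. f i (w, c)) has_derivative (\<lambda>h. fst (gr (u,c)) \<bullet> h)) (at u)"
    by (simp add: inner_Pair_0)
  have b: "((\<lambda>w. (norm (w - 0))^2) has_derivative (\<lambda>h. (2 *\<^sub>R (u - 0)) \<bullet> h)) (at u)"
    by (rule d_normsq)
  have "((\<lambda>w. f i (w, c) + mu1/2 * (norm (w - 0))^2 + mu2/2 * (norm c)^2) has_derivative
      (\<lambda>h. fst (gr (u,c)) \<bullet> h + mu1/2 * ((2 *\<^sub>R (u - 0)) \<bullet> h) + 0)) (at u)"
    by (intro has_derivative_add has_derivative_mult_right a b has_derivative_const)
  moreover have "(\<lambda>h. fst (gr (u,c)) \<bullet> h + mu1/2 * ((2 *\<^sub>R (u - 0)) \<bullet> h) + 0) = (\<lambda>h. (fst (gr (u,c)) + mu1 *\<^sub>R u) \<bullet> h)"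
    by (auto simp: fun_eq_iff inner_add_left)
  ultimately show ?thesis by (simp add: Floc_def)
qed

lemma d_Floc_y:
  assumes d: "\<And>z. (f i has_derivative (\<lambda>h. gr z \<bullet> h)) (at z)"
  shows "((\<lambda>w. Floc mu1 mu2 f i c w) has_derivative (\<lambda>h. (snd (gr (c,u)) + mu2 *\<^sub>R u) \<bullet> h)) (at u)"
proof -
  have p: "((\<lambda>w. (c, w)) has_derivative (\<lambda>h. (0, h))) (at u)" by (auto intro!: derivative_eq_intros)
  have "((\<lambda>w. f i (c, w)) has_derivative (\<lambda>h. gr (c,u) \<bullet> (0, h))) (at u)"
    using has_derivative_compose[OF p d] by simp
  then have a: "((\<lambda>w. f i (c, w)) has_derivative (\<lambda>h. snd (gr (c,u)) \<bullet> h)) (at u)"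
    by (simp add: inner_Pair_0)
  have b: "((\<lambda>w. (norm (w - 0))^2) has_derivative (\<lambda>h. (2 *\<^sub>R (u - 0)) \<bullet> h)) (at u)"
    by (rule d_normsq)
  have "((\<lambda>w. f i (c, w) + mu1/2 * (norm c)^2 + mu2/2 * (norm (w - 0))^2) has_derivative
      (\<lambda>h. snd (gr (c,u)) \<bullet> h + 0 + mu2/2 * ((2 *\<^sub>R (u - 0)) \<bullet> h))) (at u)"
    by (intro has_derivative_add has_derivative_mult_right a b has_derivative_const)
  moreover have "(\<lambda>h. snd (gr (c,u)) \<bullet> h + 0 + mu2/2 * ((2 *\<^sub>R (u - 0)) \<bullet> h)) = (\<lambda>h. (snd (gr (c,u)) + mu2 *\<^sub>R u) \<bullet> h)"
    by (auto simp: fun_eq_iff inner_add_left)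
  ultimately show ?thesis by (simp add: Floc_def)
qed

lemma sum_edges_upd:
  assumes fin: "finite E" and ne: "\<forall>e\<in>E. fst e \<noteq> snd e"
  shows "(\<Sum>e\<in>E. h e (Ablk (X(i:=w)) e)) =
    (\<Sum>e\<in>{e\<in>E. fst e = i}. h e (w - X (snd e))) + (\<Sum>e\<in>{e\<in>E. snd e = i}. h e (X (fst e) - w))
    + (\<Sum>e\<in>{e\<in>E. fst e \<noteq> i \<and> snd e \<noteq> i}. h e (Ablk X e))"
proof -
  let ?A = "{e\<in>E. fst e = i}" and ?B = "{e\<in>E. snd e = i}" and ?C = "{e\<in>E. fst e \<noteq> i \<and> snd e \<noteq> i}"
  have E: "E = (?A \<union> ?B) \<union> ?C" by auto
  have d1: "?A \<inter> ?B = {}" using ne by auto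
  have "(\<Sum>e\<in>E. h e (Ablk (X(i:=w)) e)) = (\<Sum>e\<in>?A \<union> ?B. h e (Ablk (X(i:=w)) e)) + (\<Sum>e\<in>?C. h e (Ablk (X(i:=w)) e))"
    by (subst E, rule sum.union_disjoint) (use fin in auto)
  also have "(\<Sum>e\<in>?A \<union> ?B. h e (Ablk (X(i:=w)) e)) = (\<Sum>e\<in>?A. h e (Ablk (X(i:=w)) e)) + (\<Sum>e\<in>?B. h e (Ablk (X(i:=w)) e))"
    by (rule sum.union_disjoint) (use fin d1 in auto)
  also have "(\<Sum>e\<in>?A. h e (Ablk (X(i:=w)) e)) = (\<Sum>e\<in>?A. h e (w - X (snd e)))"
    using ne by (intro sum.cong) (auto simp: Ablk_def)
  also have "(\<Sum>e\<in>?B. h e (Ablk (X(i:=w)) e)) = (\<Sum>e\<in>?B. h e (X (fst e) - w))"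
    using ne by (intro sum.cong) (auto simp: Ablk_def)
  also have "(\<Sum>e\<in>?C. h e (Ablk (X(i:=w)) e)) = (\<Sum>e\<in>?C. h e (Ablk X e))"
    by (intro sum.cong) (auto simp: Ablk_def)
  finally show ?thesis .
qed

lemma Ftot_upd:
  assumes "i \<in> vset N"
  shows "Ftot N mu1 mu2 f (X(i:=w)) Y = Floc mu1 mu2 f i w (Y i) + (\<Sum>l\<in>vset N - {i}. Floc mu1 mu2 f l (X l) (Y l))"
proof -
  have fin: "finite (vset N)" by (simp add: vset_def)
  show ?thesis unfolding Ftot_def
    by (subst sum.remove[OF fin assms]) (auto intro!: sum.cong)
qed



lemma young: "C * a * b \<le> m/2 * b^2 + C^2/(2*m) * a^2" if "m > 0" for C a b m :: real
proof -
  have "0 \<le> m/2 * (b - C*a/m)^2" using that by simp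
  also have "m/2 * (b - C*a/m)^2 = m/2 * b^2 - C*a*b + C^2/(2*m)*a^2"
    using that by (simp add: power2_eq_square field_simps)
  finally show ?thesis by simp
qed

lemma sq_diff_ineq: "(norm a)^2 - (norm b)^2 = 2 * (a \<bullet> (a - b)) - (norm (a - b))^2" for a b :: "'a::real_inner"
  by (simp add: power2_norm_eq_inner inner_diff_left inner_diff_right inner_commute)

lemma node_ineq:
  fixes \<phi> :: "('a::real_inner \<times> 'b::real_inner) \<Rightarrow> real"
  assumes cvx: "convex_on UNIV \<phi>" and d: "\<And>z. (\<phi> has_derivative (\<lambda>h. g z \<bullet> h)) (at z)"
    and lip: "\<And>z z'. norm (g z - g z') \<le> C * norm (z - z')"
    and mu1: "mu1 \<ge> 0" and m: "m > 0" "m \<le> mu2"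
  shows "(\<phi> (x', y') + mu1/2 * (norm x')^2 + mu2/2 * (norm y')^2)
       - (\<phi> (xs, ys) + mu1/2 * (norm xs)^2 + mu2/2 * (norm ys)^2)
     \<le> (fst (g (x', y)) + mu1 *\<^sub>R x') \<bullet> (x' - xs) + (snd (g (x', y')) + mu2 *\<^sub>R y') \<bullet> (y' - ys)
       + C * (C + m) / (2 * m) * (norm (y' - y))^2"
proof -
  have D: "\<phi> (x', y') \<le> \<phi> (x', y) + g (x', y) \<bullet> ((x', y') - (x', y)) + C/2 * (norm ((x', y') - (x', y)))^2"
    by (rule descent[OF d lip])
  have G: "\<phi> (x', y) + g (x', y) \<bullet> ((xs, ys) - (x', y)) \<le> \<phi> (xs, ys)"
    by (rule grad_ineq[OF cvx d])
  have D': "\<phi> (x', y') \<le> \<phi> (x', y) + snd (g (x', y)) \<bullet> (y' - y) + C/2 * (norm (y' - y))^2"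
    using D by (simp add: inner_Pair_0)
  have G': "\<phi> (x', y) + fst (g (x', y)) \<bullet> (xs - x') + snd (g (x', y)) \<bullet> (ys - y) \<le> \<phi> (xs, ys)"
    using G by (cases "g (x', y)") simp
  have lipy: "norm (snd (g (x', y)) - snd (g (x', y'))) \<le> C * norm (y' - y)"
  proof -
    have "norm (snd (g (x', y)) - snd (g (x', y'))) = norm (snd (g (x', y) - g (x', y')))" by simp
    also have "\<dots> \<le> norm (g (x', y) - g (x', y'))" by (metis norm_snd_le prod.collapse)
    also have "\<dots> \<le> C * norm ((x', y) - (x', y'))" by (rule lip)
    also have "norm ((x', y) - (x', y')) = norm (y' - y)" by (simp add: norm_minus_commute)
    finally show ?thesis .
  qed
  have E: "(snd (g (x', y)) - snd (g (x', y'))) \<bullet> (y' - ys) \<le> C * norm (y' - y) * norm (y' - ys)"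
  proof -
    have "(snd (g (x', y)) - snd (g (x', y'))) \<bullet> (y' - ys) \<le> norm (snd (g (x', y)) - snd (g (x', y'))) * norm (y' - ys)"
      by (rule norm_cauchy_schwarz)
    also have "\<dots> \<le> C * norm (y' - y) * norm (y' - ys)"
      by (rule mult_right_mono[OF lipy]) simp
    finally show ?thesis .
  qed
  have Y: "C * norm (y' - y) * norm (y' - ys) \<le> m/2 * (norm (y' - ys))^2 + C^2/(2*m) * (norm (y' - y))^2"
    by (rule young[OF m(1)])
  have R1: "mu1/2 * ((norm x')^2 - (norm xs)^2) \<le> mu1 * (x' \<bullet> (x' - xs))"
    using mu1 by (simp add: sq_diff_ineq right_diff_distrib)
  have R2: "mu2/2 * ((norm y')^2 - (norm ys)^2) \<le> mu2 * (y' \<bullet> (y' - ys)) - m/2 * (norm (y' - ys))^2"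
  proof -
    have "mu2/2 * ((norm y')^2 - (norm ys)^2) = mu2 * (y' \<bullet> (y' - ys)) - mu2/2 * (norm (y' - ys))^2"
      by (simp add: sq_diff_ineq right_diff_distrib)
    moreover have "m/2 * (norm (y' - ys))^2 \<le> mu2/2 * (norm (y' - ys))^2"
      using m by (intro mult_right_mono) auto
    ultimately show ?thesis by linarith
  qed
  have split1: "snd (g (x', y)) \<bullet> (y' - ys) = snd (g (x', y')) \<bullet> (y' - ys) + (snd (g (x', y)) - snd (g (x', y'))) \<bullet> (y' - ys)"
    by (simp add: inner_diff_left)
  have lin: "fst (g (x', y)) \<bullet> (xs - x') = - (fst (g (x', y)) \<bullet> (x' - xs))"
            "snd (g (x', y)) \<bullet> (ys - y) = snd (g (x', y)) \<bullet> (y' - y) - snd (g (x', y)) \<bullet> (y' - ys)"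
    by (simp_all add: inner_diff_right)
  have C: "C * (C + m) / (2 * m) = C/2 + C^2/(2*m)" using m by (simp add: field_simps power2_eq_square)
  show ?thesis
    unfolding inner_add_left C
    using D' G' E Y R1 R2 split1 lin by (simp add: algebra_simps)
qed



lemma finite_vset: "finite (vset N)" by (simp add: vset_def)

lemma graph_props:
  assumes "graph_ok N E"
  shows "finite E" "\<And>e. e \<in> E \<Longrightarrow> fst e \<in> vset N" "\<And>e. e \<in> E \<Longrightarrow> snd e \<in> vset N"
    "\<And>e. e \<in> E \<Longrightarrow> fst e \<noteq> snd e"
proof -
  have sub: "E \<subseteq> vset N \<times> vset N" using assms by (auto simp: graph_ok_def vset_def)
  then show "finite E" using finite_vset by (meson finite_SigmaI finite_subset)
  show "\<And>e. e \<in> E \<Longrightarrow> fst e \<in> vset N" "\<And>e. e \<in> E \<Longrightarrow> snd e \<in> vset N" using sub by auto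
  show "\<And>e. e \<in> E \<Longrightarrow> fst e \<noteq> snd e" using assms by (auto simp: graph_ok_def)
qed

lemma swap_fst:
  assumes "graph_ok N E"
  shows "(\<Sum>i\<in>vset N. \<Sum>e\<in>{e\<in>E. fst e = i}. h e i) = (\<Sum>e\<in>E. h e (fst e))"
proof -
  have "(\<Sum>i\<in>vset N. \<Sum>e\<in>{e\<in>E. fst e = i}. h e i) = (\<Sum>i\<in>vset N. \<Sum>e\<in>{e\<in>E. fst e = i}. h e (fst e))"
    by (intro sum.cong) auto
  also have "\<dots> = (\<Sum>e\<in>E. h e (fst e))"
    by (rule sum.group) (use graph_props[OF assms] finite_vset in auto)
  finally show ?thesis .
qed

lemma swap_snd:
  assumes "graph_ok N E"
  shows "(\<Sum>i\<in>vset N. \<Sum>e\<in>{e\<in>E. snd e = i}. h e i) = (\<Sum>e\<in>E. h e (snd e))"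
proof -
  have "(\<Sum>i\<in>vset N. \<Sum>e\<in>{e\<in>E. snd e = i}. h e i) = (\<Sum>i\<in>vset N. \<Sum>e\<in>{e\<in>E. snd e = i}. h e (snd e))"
    by (intro sum.cong) auto
  also have "\<dots> = (\<Sum>e\<in>E. h e (snd e))"
    by (rule sum.group) (use graph_props[OF assms] finite_vset in auto)
  finally show ?thesis .
qed

lemma deg_sum:
  assumes g: "graph_ok N E"
  shows "(\<Sum>i\<in>vset N. real (deg E i) * c i) = (\<Sum>e\<in>E. c (fst e) + c (snd e))"
proof -
  have fin: "finite E" using graph_props[OF g] by simp
  have "real (deg E i) = real (card {e\<in>E. fst e = i}) + real (card {e\<in>E. snd e = i})" for i
  proof -
    have "{e\<in>E. fst e = i \<or> snd e = i} = {e\<in>E. fst e = i} \<union> {e\<in>E. snd e = i}" by auto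
    moreover have "{e\<in>E. fst e = i} \<inter> {e\<in>E. snd e = i} = {}"
    proof (intro equals0I)
      fix e assume "e \<in> {e\<in>E. fst e = i} \<inter> {e\<in>E. snd e = i}"
      then have "e \<in> E" "fst e = i" "snd e = i" by auto
      moreover have "fst e \<noteq> snd e" using graph_props(4)[OF g] \<open>e \<in> E\<close> by blast
      ultimately show False by simp
    qed
    ultimately have "card {e\<in>E. fst e = i \<or> snd e = i} = card {e\<in>E. fst e = i} + card {e\<in>E. snd e = i}"
      using fin by (simp add: card_Un_disjoint)
    then show ?thesis by (simp add: deg_def)
  qed
  then have "(\<Sum>i\<in>vset N. real (deg E i) * c i) = (\<Sum>i\<in>vset N. (\<Sum>e\<in>{e\<in>E. fst e = i}. c i) + (\<Sum>e\<in>{e\<in>E. snd e = i}. c i))"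
    by (simp add: distrib_right)
  also have "\<dots> = (\<Sum>e\<in>E. c (fst e)) + (\<Sum>e\<in>E. c (snd e))"
  proof -
    have A: "(\<Sum>i\<in>vset N. \<Sum>e\<in>{e\<in>E. fst e = i}. c i) = (\<Sum>e\<in>E. c (fst e))" by (rule swap_fst[OF g])
    have B: "(\<Sum>i\<in>vset N. \<Sum>e\<in>{e\<in>E. snd e = i}. c i) = (\<Sum>e\<in>E. c (snd e))" by (rule swap_snd[OF g])
    show ?thesis by (simp only: sum.distrib A B)
  qed
  finally show ?thesis by (simp add: sum.distrib)
qed

lemma G1dag_alt:
  assumes g: "graph_ok N E"
  shows "G1dag_qf N E rho P W = (\<Sum>i\<in>vset N. wnorm2 (W i) (P i)) + rho * (\<Sum>e\<in>E. 2 * (W (fst e) \<bullet> W (snd e)))"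
proof -
  have "(\<Sum>i\<in>vset N. rho * real (deg E i) * (norm (W i))^2) = rho * (\<Sum>i\<in>vset N. real (deg E i) * (norm (W i))^2)"
    by (simp add: sum_distrib_left mult.assoc)
  also have "\<dots> = rho * (\<Sum>e\<in>E. (norm (W (fst e)))^2 + (norm (W (snd e)))^2)"
    by (simp add: deg_sum[OF g])
  finally have a: "(\<Sum>i\<in>vset N. rho * real (deg E i) * (norm (W i))^2) = rho * (\<Sum>e\<in>E. (norm (W (fst e)))^2 + (norm (W (snd e)))^2)" .
  have b: "(norm (W (fst e)))^2 + (norm (W (snd e)))^2 - (norm (Ablk W e))^2 = 2 * (W (fst e) \<bullet> W (snd e))" for e
    by (simp add: Ablk_def power2_norm_eq_inner inner_diff_left inner_diff_right inner_commute)
  have "G1dag_qf N E rho P W = (\<Sum>i\<in>vset N. wnorm2 (W i) (P i)) + rho * ((\<Sum>e\<in>E. (norm (W (fst e)))^2 + (norm (W (snd e)))^2) - (\<Sum>e\<in>E. (norm (Ablk W e))^2))"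
    unfolding G1dag_qf_def G1_qf_def sum.distrib a by (simp add: algebra_simps)
  also have "(\<Sum>e\<in>E. (norm (W (fst e)))^2 + (norm (W (snd e)))^2) - (\<Sum>e\<in>E. (norm (Ablk W e))^2) = (\<Sum>e\<in>E. 2 * (W (fst e) \<bullet> W (snd e)))"
    unfolding sum_subtractf[symmetric] b ..
  finally show ?thesis .
qed

lemma ATlam_sum:
  assumes g: "graph_ok N E"
  shows "(\<Sum>i\<in>vset N. ATlam E l i \<bullet> d i) = (\<Sum>e\<in>E. l e \<bullet> (d (fst e) - d (snd e)))"
proof -
  have "(\<Sum>i\<in>vset N. ATlam E l i \<bullet> d i) = (\<Sum>i\<in>vset N. \<Sum>e\<in>{e\<in>E. fst e = i}. l e \<bullet> d i) - (\<Sum>i\<in>vset N. \<Sum>e\<in>{e\<in>E. snd e = i}. l e \<bullet> d i)"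
    by (simp add: ATlam_def inner_diff_left inner_sum_left sum_subtractf)
  also have "\<dots> = (\<Sum>e\<in>E. l e \<bullet> d (fst e)) - (\<Sum>e\<in>E. l e \<bullet> d (snd e))"
    by (simp add: swap_fst[OF g] swap_snd[OF g])
  finally show ?thesis by (simp add: inner_diff_right sum_subtractf)
qed

lemma Floc_grad_ineq:
  assumes cvx: "convex_on UNIV (f i)" and d: "\<And>z. (f i has_derivative (\<lambda>h. gr z \<bullet> h)) (at z)"
    and mu: "mu1 \<ge> 0" "mu2 \<ge> 0"
  shows "Floc mu1 mu2 f i a0 b0 + (fst (gr (a0,b0)) + mu1 *\<^sub>R a0) \<bullet> (a - a0) + (snd (gr (a0,b0)) + mu2 *\<^sub>R b0) \<bullet> (b - b0)
     \<le> Floc mu1 mu2 f i a b"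
proof -
  have G: "f i (a0,b0) + gr (a0,b0) \<bullet> ((a,b) - (a0,b0)) \<le> f i (a,b)" by (rule grad_ineq[OF cvx d])
  have G': "f i (a0,b0) + fst (gr (a0,b0)) \<bullet> (a - a0) + snd (gr (a0,b0)) \<bullet> (b - b0) \<le> f i (a,b)"
    using G by (cases "gr (a0,b0)") simp
  have q: "2 * (a0 \<bullet> (a - a0)) \<le> (norm a)^2 - (norm a0)^2" for a a0 :: "'z::real_inner"
  proof -
    have "(norm a)^2 - (norm a0)^2 = 2 * (a \<bullet> (a - a0)) - (norm (a - a0))^2" by (rule sq_diff_ineq)
    moreover have "a \<bullet> (a - a0) = a0 \<bullet> (a - a0) + (norm (a - a0))^2"
      by (simp add: power2_norm_eq_inner inner_diff_left inner_diff_right inner_commute)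
    ultimately show ?thesis by simp
  qed
  have q1: "mu1 * (a0 \<bullet> (a - a0)) \<le> mu1/2 * ((norm a)^2 - (norm a0)^2)"
    using mult_left_mono[OF q[of a0 a] mu(1)] by simp
  have q2: "mu2 * (b0 \<bullet> (b - b0)) \<le> mu2/2 * ((norm b)^2 - (norm b0)^2)"
    using mult_left_mono[OF q[of b0 b] mu(2)] by simp
  show ?thesis using G' q1 q2 unfolding Floc_def inner_add_left by (simp add: algebra_simps)
qed



lemma foc_y:
  assumes d: "\<And>z. (f i has_derivative (\<lambda>h. gr z \<bullet> h)) (at z)" and sym: "transpose Q = Q"
    and min: "\<And>w. Floc mu1 mu2 f i c v + 1/2 * wnorm2 (v - b) Q \<le> Floc mu1 mu2 f i c w + 1/2 * wnorm2 (w - b) Q"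
  shows "snd (gr (c, v)) + mu2 *\<^sub>R v = - (Q *v (v - b))"
proof -
  have "((\<lambda>w. Floc mu1 mu2 f i c w + 1/2 * wnorm2 (w - b) Q) has_derivative
      (\<lambda>h. (snd (gr (c, v)) + mu2 *\<^sub>R v) \<bullet> h + 1/2 * ((2 *\<^sub>R (Q *v (v - b))) \<bullet> h))) (at v)"
    by (intro has_derivative_add has_derivative_mult_right d_Floc_y[where f=f and i=i, OF d] d_wnorm2[OF sym])
  moreover have "(\<lambda>h. (snd (gr (c, v)) + mu2 *\<^sub>R v) \<bullet> h + 1/2 * ((2 *\<^sub>R (Q *v (v - b))) \<bullet> h))
     = (\<lambda>h. (snd (gr (c, v)) + mu2 *\<^sub>R v + Q *v (v - b)) \<bullet> h)"
    by (auto simp: fun_eq_iff inner_add_left)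
  ultimately have der: "((\<lambda>w. Floc mu1 mu2 f i c w + 1/2 * wnorm2 (w - b) Q) has_derivative
      (\<lambda>h. (snd (gr (c, v)) + mu2 *\<^sub>R v + Q *v (v - b)) \<bullet> h)) (at v)" by simp
  have "snd (gr (c, v)) + mu2 *\<^sub>R v + Q *v (v - b) = 0"
    by (rule foc_zero[of "\<lambda>w. Floc mu1 mu2 f i c w + 1/2 * wnorm2 (w - b) Q" v, OF min der])
  then show ?thesis by (simp add: eq_neg_iff_add_eq_0)
qed

lemma foc_x:
  assumes g: "graph_ok N E" and i: "i \<in> vset N"
    and d: "\<And>z. (f i has_derivative (\<lambda>h. gr z \<bullet> h)) (at z)" and sym: "transpose (P i) = P i"
    and min: "\<And>w. Lrho N E mu1 mu2 f rho (X(i := u)) Y l + 1/2 * wnorm2 (u - X i) (P i)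
                 \<le> Lrho N E mu1 mu2 f rho (X(i := w)) Y l + 1/2 * wnorm2 (w - X i) (P i)"
  shows "fst (gr (u, Y i)) + mu1 *\<^sub>R u = ATlam E l i
      - rho *\<^sub>R ((\<Sum>e\<in>{e\<in>E. fst e = i}. u - X (snd e)) + (\<Sum>e\<in>{e\<in>E. snd e = i}. u - X (fst e)))
      - P i *v (u - X i)"
proof -
  let ?E1 = "{e\<in>E. fst e = i}" and ?E2 = "{e\<in>E. snd e = i}" and ?E3 = "{e\<in>E. fst e \<noteq> i \<and> snd e \<noteq> i}"
  have finE: "finite E" and ne: "\<forall>e\<in>E. fst e \<noteq> snd e" using graph_props[OF g] by auto
  have fin1: "finite ?E1" and fin2: "finite ?E2" using finE by auto
  define \<psi> where "\<psi> w = Floc mu1 mu2 f i w (Y i) - (\<Sum>e\<in>?E1. l e \<bullet> (w - X (snd e))) - (\<Sum>e\<in>?E2. l e \<bullet> (X (fst e) - w))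
     + rho/2 * (\<Sum>e\<in>?E1. (norm (w - X (snd e)))^2) + rho/2 * (\<Sum>e\<in>?E2. (norm (w - X (fst e)))^2)
     + 1/2 * wnorm2 (w - X i) (P i)" for w
  define K where "K = (\<Sum>l'\<in>vset N - {i}. Floc mu1 mu2 f l' (X l') (Y l')) - (\<Sum>e\<in>?E3. l e \<bullet> Ablk X e)
     + rho/2 * (\<Sum>e\<in>?E3. (norm (Ablk X e))^2)"
  have dec: "Lrho N E mu1 mu2 f rho (X(i := w)) Y l + 1/2 * wnorm2 (w - X i) (P i) = \<psi> w + K" for w
  proof -
    have s1: "(\<Sum>e\<in>E. l e \<bullet> Ablk (X(i:=w)) e) = (\<Sum>e\<in>?E1. l e \<bullet> (w - X (snd e))) + (\<Sum>e\<in>?E2. l e \<bullet> (X (fst e) - w)) + (\<Sum>e\<in>?E3. l e \<bullet> Ablk X e)"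
      by (rule sum_edges_upd[OF finE ne])
    have s2: "(\<Sum>e\<in>E. (norm (Ablk (X(i:=w)) e))^2) = (\<Sum>e\<in>?E1. (norm (w - X (snd e)))^2) + (\<Sum>e\<in>?E2. (norm (X (fst e) - w))^2) + (\<Sum>e\<in>?E3. (norm (Ablk X e))^2)"
      by (rule sum_edges_upd[OF finE ne])
    have s3: "(\<Sum>e\<in>?E2. (norm (X (fst e) - w))^2) = (\<Sum>e\<in>?E2. (norm (w - X (fst e)))^2)"
      by (simp add: norm_minus_commute)
    show ?thesis
      unfolding Lrho_def Ftot_upd[OF i] s1 s2 s3 \<psi>_def K_def distrib_left by linarith
  qed
  have minpsi: "\<psi> u \<le> \<psi> w" for w using min[of w] unfolding dec by simp
  define A where "A = fst (gr (u, Y i)) + mu1 *\<^sub>R u"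
  define L1 where "L1 = (\<Sum>e\<in>?E1. l e)"
  define L2 where "L2 = (\<Sum>e\<in>?E2. l e)"
  define S1 where "S1 = (\<Sum>e\<in>?E1. u - X (snd e))"
  define S2 where "S2 = (\<Sum>e\<in>?E2. u - X (fst e))"
  define M where "M = P i *v (u - X i)"
  have d1: "((\<lambda>w. Floc mu1 mu2 f i w (Y i)) has_derivative (\<lambda>h. A \<bullet> h)) (at u)"
    unfolding A_def by (rule d_Floc_x[where f=f and i=i, OF d])
  have d2: "((\<lambda>w. \<Sum>e\<in>?E1. l e \<bullet> (w - X (snd e))) has_derivative (\<lambda>h. L1 \<bullet> h)) (at u)"
  proof -
    have "((\<lambda>w. \<Sum>e\<in>?E1. l e \<bullet> (w - X (snd e))) has_derivative (\<lambda>h. \<Sum>e\<in>?E1. l e \<bullet> h)) (at u)"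
      by (auto intro!: derivative_eq_intros)
    then show ?thesis unfolding L1_def by (simp add: inner_sum_left)
  qed
  have d3: "((\<lambda>w. \<Sum>e\<in>?E2. l e \<bullet> (X (fst e) - w)) has_derivative (\<lambda>h. - (L2 \<bullet> h))) (at u)"
  proof -
    have "((\<lambda>w. \<Sum>e\<in>?E2. l e \<bullet> (X (fst e) - w)) has_derivative (\<lambda>h. \<Sum>e\<in>?E2. l e \<bullet> (0 - h))) (at u)"
      by (auto intro!: derivative_eq_intros)
    then show ?thesis unfolding L2_def by (simp add: inner_sum_left sum_negf)
  qed
  have d4: "((\<lambda>w. \<Sum>e\<in>?E1. (norm (w - X (snd e)))^2) has_derivative (\<lambda>h. (2 *\<^sub>R S1) \<bullet> h)) (at u)"
  proof -
    have "((\<lambda>w. \<Sum>e\<in>?E1. (norm (w - X (snd e)))^2) has_derivative (\<lambda>h. \<Sum>e\<in>?E1. (2 *\<^sub>R (u - X (snd e))) \<bullet> h)) (at u)"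
      by (intro has_derivative_sum d_normsq)
    then show ?thesis unfolding S1_def by (simp add: inner_sum_left scaleR_sum_right)
  qed
  have d5: "((\<lambda>w. \<Sum>e\<in>?E2. (norm (w - X (fst e)))^2) has_derivative (\<lambda>h. (2 *\<^sub>R S2) \<bullet> h)) (at u)"
  proof -
    have "((\<lambda>w. \<Sum>e\<in>?E2. (norm (w - X (fst e)))^2) has_derivative (\<lambda>h. \<Sum>e\<in>?E2. (2 *\<^sub>R (u - X (fst e))) \<bullet> h)) (at u)"
      by (intro has_derivative_sum d_normsq)
    then show ?thesis unfolding S2_def by (simp add: inner_sum_left scaleR_sum_right)
  qed
  have d6: "((\<lambda>w. wnorm2 (w - X i) (P i)) has_derivative (\<lambda>h. (2 *\<^sub>R M) \<bullet> h)) (at u)"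
    unfolding M_def by (rule d_wnorm2[OF sym])
  have "(\<psi> has_derivative (\<lambda>h. A \<bullet> h - L1 \<bullet> h - - (L2 \<bullet> h) + rho/2 * ((2 *\<^sub>R S1) \<bullet> h) + rho/2 * ((2 *\<^sub>R S2) \<bullet> h) + 1/2 * ((2 *\<^sub>R M) \<bullet> h))) (at u)"
    unfolding \<psi>_def
    by (intro has_derivative_add has_derivative_diff has_derivative_mult_right d1 d2 d3 d4 d5 d6)
  moreover have "(\<lambda>h. A \<bullet> h - L1 \<bullet> h - - (L2 \<bullet> h) + rho/2 * ((2 *\<^sub>R S1) \<bullet> h) + rho/2 * ((2 *\<^sub>R S2) \<bullet> h) + 1/2 * ((2 *\<^sub>R M) \<bullet> h))
     = (\<lambda>h. (A - L1 + L2 + rho *\<^sub>R (S1 + S2) + M) \<bullet> h)"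
    by (rule ext) (simp add: inner_add_left inner_diff_left distrib_left)
  ultimately have der: "(\<psi> has_derivative (\<lambda>h. (A - L1 + L2 + rho *\<^sub>R (S1 + S2) + M) \<bullet> h)) (at u)" by simp
  have "A - L1 + L2 + rho *\<^sub>R (S1 + S2) + M = 0"
    by (rule foc_zero[of \<psi> u, OF minpsi der])
  moreover have "ATlam E l i = L1 - L2" by (simp add: ATlam_def L1_def L2_def)
  moreover have "A = (A - L1 + L2 + rho *\<^sub>R (S1 + S2) + M) + (L1 - L2) - rho *\<^sub>R (S1 + S2) - M"
    by (simp add: algebra_simps)
  ultimately show ?thesis unfolding A_def S1_def S2_def M_def by simp
qed



lemma polar:
  fixes S :: "real^'n^'n"
  assumes sym: "transpose S = S"
  shows "(S *v (a - b)) \<bullet> (a - c) = 1/2 * (wnorm2 (a - c) S + wnorm2 (a - b) S - wnorm2 (b - c) S)"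
proof -
  define u where "u = a - c"
  define v where "v = b - c"
  have ab: "a - b = u - v" by (simp add: u_def v_def)
  have bc: "b - c = v" by (simp add: v_def)
  have s: "v \<bullet> (S *v u) = u \<bullet> (S *v v)"
  proof -
    have "v \<bullet> (S *v u) = (S *v v) \<bullet> u" by (rule inner_mat_sym[OF sym])
    also have "\<dots> = u \<bullet> (S *v v)" by (rule inner_commute)
    finally show ?thesis .
  qed
  have "(S *v (u - v)) \<bullet> u = 1/2 * (wnorm2 u S + wnorm2 (u - v) S - wnorm2 v S)"
  proof -
    have A1: "(S *v u) \<bullet> u = u \<bullet> (S *v u)" by (rule inner_commute)
    have A2: "(S *v v) \<bullet> u = u \<bullet> (S *v v)"
      by (rule inner_commute)
    show ?thesis unfolding wnorm2_def matrix_vector_mult_diff_distrib inner_diff_left inner_diff_right A1 A2 s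
      by simp
  qed
  then show ?thesis by (simp add: ab bc u_def[symmetric])
qed

lemma edge_id:
  fixes xa xb xa' xb' s :: "'a::real_inner"
  shows "(xa' - xb) \<bullet> (xa' - s) + (xb' - xa) \<bullet> (xb' - s)
    = (norm (xa' - xb'))^2 - ((xa - s) \<bullet> (xb - s) - (xa' - s) \<bullet> (xb' - s) - (xa' - xa) \<bullet> (xb' - xb))"
  by (simp add: power2_norm_eq_inner inner_diff_left inner_diff_right inner_commute algebra_simps)

lemma dual_edge:
  fixes l a :: "'a::real_inner" and gamma rho :: real
  assumes g: "0 < gamma" "gamma < 2" and r: "rho > 0"
  shows "l \<bullet> a - rho * (norm a)^2 \<le> ((norm l)^2 - (norm (l - (gamma * rho) *\<^sub>R a))^2) / (2 * gamma * rho)"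
proof -
  have e: "(norm (l - (gamma * rho) *\<^sub>R a))^2 = (norm l)^2 - 2 * (gamma * rho) * (l \<bullet> a) + (gamma * rho)^2 * (norm a)^2"
    unfolding power2_norm_eq_inner by (simp add: inner_diff_left inner_diff_right inner_commute power2_eq_square algebra_simps)
  have pos: "2 * gamma * rho > 0" using g r by simp
  have "((norm l)^2 - (norm (l - (gamma * rho) *\<^sub>R a))^2) / (2 * gamma * rho) = l \<bullet> a - gamma * rho / 2 * (norm a)^2"
  proof -
    have nz: "gamma \<noteq> 0" "rho \<noteq> 0" using g r by auto
    show ?thesis unfolding e using nz by (simp add: field_simps power2_eq_square)
  qed
  moreover have "gamma * rho / 2 * (norm a)^2 \<le> rho * (norm a)^2"
    using g r by (intro mult_right_mono) auto
  ultimately show ?thesis by linarith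
qed

lemma psd_of_posdef:
  assumes "posdef_blk N q" and "\<And>W. (\<forall>i\<in>vset N. W i = 0) \<Longrightarrow> q W = 0"
  shows "q W \<ge> 0"
proof (cases "\<exists>i\<in>vset N. W i \<noteq> 0")
  case True
  then have "q W > 0" using assms(1) unfolding posdef_blk_def by blast
  then show ?thesis by simp
next
  case False
  then have "\<forall>i\<in>vset N. W i = 0" by blast
  then show ?thesis using assms(2) by simp
qed



lemma Ftot_avg:
  assumes cvx: "\<And>i. i \<in> vset N \<Longrightarrow> convex_on UNIV (f i)"
    and diff: "\<And>i z. i \<in> vset N \<Longrightarrow> (f i has_derivative (\<lambda>h. grad i z \<bullet> h)) (at z)"
    and mu: "mu1 \<ge> 0" "mu2 \<ge> 0" and k: "k \<ge> 1"
  shows "Ftot N mu1 mu2 f (\<lambda>i. (1 / real k) *\<^sub>R (\<Sum>j=1..k. Wc j i)) (\<lambda>i. (1 / real k) *\<^sub>R (\<Sum>j=1..k. Wh j i))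
     \<le> (1 / real k) * (\<Sum>j=1..k. Ftot N mu1 mu2 f (Wc j) (Wh j))"
proof -
  have kpos: "real k > 0" using k by simp
  have node: "Floc mu1 mu2 f i ((1 / real k) *\<^sub>R (\<Sum>j=1..k. Wc j i)) ((1 / real k) *\<^sub>R (\<Sum>j=1..k. Wh j i))
      \<le> (1 / real k) * (\<Sum>j=1..k. Floc mu1 mu2 f i (Wc j i) (Wh j i))" if i: "i \<in> vset N" for i
  proof -
    define a0 where "a0 = (1 / real k) *\<^sub>R (\<Sum>j=1..k. Wc j i)"
    define b0 where "b0 = (1 / real k) *\<^sub>R (\<Sum>j=1..k. Wh j i)"
    define G1 where "G1 = fst (grad i (a0,b0)) + mu1 *\<^sub>R a0"
    define G2 where "G2 = snd (grad i (a0,b0)) + mu2 *\<^sub>R b0"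
    have ineq: "Floc mu1 mu2 f i a0 b0 + G1 \<bullet> (Wc j i - a0) + G2 \<bullet> (Wh j i - b0) \<le> Floc mu1 mu2 f i (Wc j i) (Wh j i)" for j
      unfolding G1_def G2_def by (rule Floc_grad_ineq[where f=f and i=i, OF cvx[OF i] diff[OF i] mu])
    have "(\<Sum>j=1..k. Floc mu1 mu2 f i a0 b0 + G1 \<bullet> (Wc j i - a0) + G2 \<bullet> (Wh j i - b0)) \<le> (\<Sum>j=1..k. Floc mu1 mu2 f i (Wc j i) (Wh j i))"
      by (rule sum_mono[OF ineq])
    moreover have "(\<Sum>j=1..k. G1 \<bullet> (Wc j i - a0)) = 0"
    proof -
      have "(\<Sum>j=1..k. G1 \<bullet> (Wc j i - a0)) = G1 \<bullet> ((\<Sum>j=1..k. Wc j i) - real k *\<^sub>R a0)"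
        by (simp add: inner_sum_right[symmetric] sum_subtractf scaleR_conv_of_real)
      also have "(\<Sum>j=1..k. Wc j i) - real k *\<^sub>R a0 = 0" unfolding a0_def using kpos by simp
      finally show ?thesis by simp
    qed
    moreover have "(\<Sum>j=1..k. G2 \<bullet> (Wh j i - b0)) = 0"
    proof -
      have "(\<Sum>j=1..k. G2 \<bullet> (Wh j i - b0)) = G2 \<bullet> ((\<Sum>j=1..k. Wh j i) - real k *\<^sub>R b0)"
        by (simp add: inner_sum_right[symmetric] sum_subtractf scaleR_conv_of_real)
      also have "(\<Sum>j=1..k. Wh j i) - real k *\<^sub>R b0 = 0" unfolding b0_def using kpos by simp
      finally show ?thesis by simp
    qed
    ultimately have "real k * Floc mu1 mu2 f i a0 b0 \<le> (\<Sum>j=1..k. Floc mu1 mu2 f i (Wc j i) (Wh j i))"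
      by (simp add: sum.distrib)
    then show ?thesis unfolding a0_def[symmetric] b0_def[symmetric] using kpos
      by (simp add: field_simps)
  qed
  have "Ftot N mu1 mu2 f (\<lambda>i. (1 / real k) *\<^sub>R (\<Sum>j=1..k. Wc j i)) (\<lambda>i. (1 / real k) *\<^sub>R (\<Sum>j=1..k. Wh j i))
      \<le> (\<Sum>i\<in>vset N. (1 / real k) * (\<Sum>j=1..k. Floc mu1 mu2 f i (Wc j i) (Wh j i)))"
    unfolding Ftot_def by (rule sum_mono[OF node])
  also have "\<dots> = (1 / real k) * (\<Sum>j=1..k. Ftot N mu1 mu2 f (Wc j) (Wh j))"
    unfolding Ftot_def sum_distrib_left[symmetric] by (subst sum.swap) simp
  finally show ?thesis .
qed



lemma comb:
  fixes Pd F T L a1 a2 b1 b2 g h :: real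
  assumes "Pd = 1/2 * (a1 - a2) + 1/2 * (b1 - b2) + L" "F \<le> T + 1/2 * (a1 - a2 - g) + 1/2 * (b1 - b2) - 1/2 * h"
    "T \<le> L" "0 \<le> g" "0 \<le> h"
  shows "F \<le> Pd"
  using assms by (simp add: field_simps)

lemma fin1: fixes S1 S2 x P0 Pk :: real
  shows "S1 \<le> (P0 - Pk) / 2 \<Longrightarrow> 0 \<le> Pk \<Longrightarrow> S1 = S2 - x \<Longrightarrow> S2 - x \<le> P0 / 2"
  by (simp add: field_simps)

lemma fin2: fixes a b F c X :: real
  shows "a \<le> b \<Longrightarrow> b - F \<le> c \<Longrightarrow> X = c \<Longrightarrow> a - F \<le> X"
  by linarith


lemma fin3: fixes S F P k :: real
  assumes "k > 0" "S - k * F \<le> P / 2"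
  shows "(1 / k) * S - F \<le> P / (2 * k)"
proof -
  have "(1 / k) * S - F = (S - k * F) / k" using assms(1) by (simp add: field_simps)
  also have "\<dots> \<le> (P / 2) / k" using assms by (intro divide_right_mono) auto
  finally show ?thesis by simp
qed

lemma lin_id: "((a::real) + b + e - (c + d + f)) / 2 = 1/2 * (a - c) + 1/2 * (b - d) + (e - f) / 2"
  by (simp add: field_simps)


theorem corollary1:
  fixes N :: nat and E :: "(nat \<times> nat) set"
    and f :: "nat \<Rightarrow> (real^'n) \<times> (real^'n) \<Rightarrow> real"
    and grad :: "nat \<Rightarrow> (real^'n) \<times> (real^'n) \<Rightarrow> (real^'n) \<times> (real^'n)"
    and C :: "nat \<Rightarrow> real" and mu1 mu2 m rho gamma :: real
    and P Q :: "nat \<Rightarrow> real^'n^'n"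
    and Wcs Whs :: "nat \<Rightarrow> real^'n" and lams :: "nat \<times> nat \<Rightarrow> real^'n"
    and Wc Wh :: "nat \<Rightarrow> nat \<Rightarrow> real^'n" and lam :: "nat \<Rightarrow> nat \<times> nat \<Rightarrow> real^'n"
    and k :: nat
  assumes N2: "N \<ge> 2"
    and graph: "graph_ok N E" and conn: "connected_graph N E"
    and diff: "\<And>i z. i \<in> vset N \<Longrightarrow> (f i has_derivative (\<lambda>h. grad i z \<bullet> h)) (at z)"
    and cvx: "\<And>i. i \<in> vset N \<Longrightarrow> convex_on UNIV (f i)"
    and lip: "\<And>i z z'. i \<in> vset N \<Longrightarrow> norm (grad i z - grad i z') \<le> C i * norm (z - z')"
    and mu1: "mu1 \<ge> 0" and mu2: "mu2 > 0" and m: "0 < m" "m \<le> mu2"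
    and rho: "rho > 0"
    and Psym: "\<And>i. i \<in> vset N \<Longrightarrow> transpose (P i) = P i"
    and Qsym: "\<And>i. i \<in> vset N \<Longrightarrow> transpose (Q i) = Q i"
    and kkt1: "\<forall>e\<in>E. Ablk Wcs e = 0"
    and kkt2: "\<forall>i\<in>vset N. ATlam E lams i = fst (grad i (Wcs i, Whs i)) + mu1 *\<^sub>R Wcs i"
    and kkt3: "\<forall>i\<in>vset N. snd (grad i (Wcs i, Whs i)) + mu2 *\<^sub>R Whs i = 0"
    and G1pd: "posdef_blk N (G1dag_qf N E rho P)"
    and G2G3: "posdef_blk N (\<lambda>W. G2_qf N Q W - G3_qf N C m W)"
    and gamma: "0 < gamma" "gamma < 2"
    and lam0: "\<forall>e\<in>E. lam 0 e = 0"
    and step1: "\<And>j i w. i \<in> vset N \<Longrightarrow>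
        Lrho N E mu1 mu2 f rho ((Wc j)(i := Wc (Suc j) i)) (Wh j) (lam j)
          + 1/2 * wnorm2 (Wc (Suc j) i - Wc j i) (P i)
        \<le> Lrho N E mu1 mu2 f rho ((Wc j)(i := w)) (Wh j) (lam j)
          + 1/2 * wnorm2 (w - Wc j i) (P i)"
    and step2: "\<And>j e. e \<in> E \<Longrightarrow> lam (Suc j) e = lam j e - (gamma * rho) *\<^sub>R Ablk (Wc (Suc j)) e"
    and step3: "\<And>j i w. i \<in> vset N \<Longrightarrow>
        Floc mu1 mu2 f i (Wc (Suc j) i) (Wh (Suc j) i) + 1/2 * wnorm2 (Wh (Suc j) i - Wh j i) (Q i)
        \<le> Floc mu1 mu2 f i (Wc (Suc j) i) w + 1/2 * wnorm2 (w - Wh j i) (Q i)"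
    and k1: "k \<ge> 1"
  shows "Ftot N mu1 mu2 f (\<lambda>i. (1 / real k) *\<^sub>R (\<Sum>j=1..k. Wc j i))
                         (\<lambda>i. (1 / real k) *\<^sub>R (\<Sum>j=1..k. Wh j i))
         - Ftot N mu1 mu2 f Wcs Whs
       \<le> 1 / (2 * real k) * (G1dag_qf N E rho P (\<lambda>i. Wc 0 i - Wcs i)
                             + G2_qf N Q (\<lambda>i. Wh 0 i - Whs i))"
  proof -
  note gp = graph_props[OF graph]
  have xs_eq: "Wcs (snd e) = Wcs (fst e)" if "e \<in> E" for e
    using kkt1 that by (simp add: Ablk_def)
  have Cnn: "C i \<ge> 0" if i: "i \<in> vset N" for i
  proof -
    have ne: "(1::real^'n) \<noteq> 0" by (simp add: vec_eq_iff)
    have l: "norm (grad i (0,0) - grad i (1,0)) \<le> C i * norm ((0::real^'n, 0::real^'n) - (1,0))"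
      by (rule lip[OF i])
    have p: "norm ((0::real^'n, 0::real^'n) - (1,0)) > 0" using ne by simp
    have "0 \<le> C i * norm ((0::real^'n, 0::real^'n) - (1,0))" by (rule order_trans[OF norm_ge_zero l])
    with p show ?thesis by (simp add: zero_le_mult_iff)
  qed
  have z1: "G1dag_qf N E rho P W = 0" if W: "\<forall>i\<in>vset N. W i = 0" for W
  proof -
    have a: "(\<Sum>i\<in>vset N. wnorm2 (W i) (P i)) = 0" using W by (simp add: wnorm2_def)
    have b: "(\<Sum>e\<in>E. 2 * (W (fst e) \<bullet> W (snd e))) = 0"
      by (rule sum.neutral) (use W gp in auto)
    show ?thesis unfolding G1dag_alt[OF graph] a b by simp
  qed
  have psd1: "G1dag_qf N E rho P W \<ge> 0" for W
    by (rule psd_of_posdef[OF G1pd z1])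
  have psd23: "G2_qf N Q W - G3_qf N C m W \<ge> 0" for W
    by (rule psd_of_posdef[OF G2G3]) (simp add: G2_qf_def G3_qf_def wnorm2_def)
  have G3nn: "G3_qf N C m W \<ge> 0" for W
    unfolding G3_qf_def
    by (intro sum_nonneg mult_nonneg_nonneg divide_nonneg_pos) (use Cnn m in auto)
  have G2nn: "G2_qf N Q W \<ge> 0" for W using psd23[of W] G3nn[of W] by linarith
  define Phi where "Phi j = G1dag_qf N E rho P (\<lambda>i. Wc j i - Wcs i) + G2_qf N Q (\<lambda>i. Wh j i - Whs i)
      + (\<Sum>e\<in>E. (norm (lam j e))^2) / (gamma * rho)" for j
  have Phi_nn: "Phi j \<ge> 0" for j
  proof -
    have "(\<Sum>e\<in>E. (norm (lam j e))^2) / (gamma * rho) \<ge> 0"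
      using gamma rho by (intro divide_nonneg_pos sum_nonneg) auto
    then show ?thesis unfolding Phi_def using psd1 G2nn by (smt (verit))
  qed
  have Phi0: "Phi 0 = G1dag_qf N E rho P (\<lambda>i. Wc 0 i - Wcs i) + G2_qf N Q (\<lambda>i. Wh 0 i - Whs i)"
    unfolding Phi_def using lam0 by simp
  have step: "Ftot N mu1 mu2 f (Wc (Suc j)) (Wh (Suc j)) - Ftot N mu1 mu2 f Wcs Whs \<le> (Phi j - Phi (Suc j)) / 2" for j
  proof -
    define R where "R i = (\<Sum>e\<in>{e\<in>E. fst e = i}. Wc (Suc j) i - Wc j (snd e)) + (\<Sum>e\<in>{e\<in>E. snd e = i}. Wc (Suc j) i - Wc j (fst e))" for i
    define c where "c i = C i * (C i + m) / (2 * m)" for i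
    define dx where "dx i = Wc (Suc j) i - Wcs i" for i
    define Dx where "Dx i = Wc (Suc j) i - Wc j i" for i
    define wx where "wx i = Wc j i - Wcs i" for i
    define dy where "dy i = Wh (Suc j) i - Whs i" for i
    define Dy where "Dy i = Wh (Suc j) i - Wh j i" for i
    define wy where "wy i = Wh j i - Whs i" for i
    have nodeB: "Floc mu1 mu2 f i (Wc (Suc j) i) (Wh (Suc j) i) - Floc mu1 mu2 f i (Wcs i) (Whs i)
       \<le> ATlam E (lam j) i \<bullet> dx i - rho * (R i \<bullet> dx i) - (P i *v Dx i) \<bullet> dx i
         - (Q i *v Dy i) \<bullet> dy i + c i * (norm (Dy i))^2" if i: "i \<in> vset N" for i
    proof -
      have fx: "fst (grad i (Wc (Suc j) i, Wh j i)) + mu1 *\<^sub>R Wc (Suc j) i = ATlam E (lam j) i - rho *\<^sub>R R i - P i *v (Wc (Suc j) i - Wc j i)"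
        unfolding R_def by (rule foc_x[where f=f and i=i and gr="grad i" and X="Wc j" and u="Wc (Suc j) i" and Y="Wh j" and l="lam j" and P=P and N=N and E=E and ?mu1.0=mu1 and ?mu2.0=mu2 and rho=rho, OF graph i diff[OF i] Psym[OF i] step1[where j=j and i=i, OF i]])
      have fy: "snd (grad i (Wc (Suc j) i, Wh (Suc j) i)) + mu2 *\<^sub>R Wh (Suc j) i = - (Q i *v (Wh (Suc j) i - Wh j i))"
        by (rule foc_y[where f=f and i=i and gr="grad i" and Q="Q i" and ?mu1.0=mu1 and ?mu2.0=mu2, OF diff[OF i] Qsym[OF i] step3[where j=j and i=i, OF i]])
      note nd = node_ineq[where \<phi>="f i" and g="grad i" and x'="Wc (Suc j) i" and y'="Wh (Suc j) i"
          and xs="Wcs i" and ys="Whs i" and y="Wh j i", OF cvx[OF i] diff[OF i] lip[OF i] mu1 m]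
      show ?thesis using nd unfolding fx fy Floc_def c_def dx_def Dx_def dy_def Dy_def
        by (simp add: inner_diff_left)
    qed
    have sumB: "Ftot N mu1 mu2 f (Wc (Suc j)) (Wh (Suc j)) - Ftot N mu1 mu2 f Wcs Whs
       \<le> (\<Sum>i\<in>vset N. ATlam E (lam j) i \<bullet> dx i) - rho * (\<Sum>i\<in>vset N. R i \<bullet> dx i)
         - (\<Sum>i\<in>vset N. (P i *v Dx i) \<bullet> dx i) - (\<Sum>i\<in>vset N. (Q i *v Dy i) \<bullet> dy i)
         + (\<Sum>i\<in>vset N. c i * (norm (Dy i))^2)"
    proof -
      have "Ftot N mu1 mu2 f (Wc (Suc j)) (Wh (Suc j)) - Ftot N mu1 mu2 f Wcs Whs
          = (\<Sum>i\<in>vset N. Floc mu1 mu2 f i (Wc (Suc j) i) (Wh (Suc j) i) - Floc mu1 mu2 f i (Wcs i) (Whs i))"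
        by (simp add: Ftot_def sum_subtractf)
      also have "\<dots> \<le> (\<Sum>i\<in>vset N. ATlam E (lam j) i \<bullet> dx i - rho * (R i \<bullet> dx i) - (P i *v Dx i) \<bullet> dx i
         - (Q i *v Dy i) \<bullet> dy i + c i * (norm (Dy i))^2)"
        by (rule sum_mono[OF nodeB])
      also have "\<dots> = (\<Sum>i\<in>vset N. ATlam E (lam j) i \<bullet> dx i) - rho * (\<Sum>i\<in>vset N. R i \<bullet> dx i)
         - (\<Sum>i\<in>vset N. (P i *v Dx i) \<bullet> dx i) - (\<Sum>i\<in>vset N. (Q i *v Dy i) \<bullet> dy i)
         + (\<Sum>i\<in>vset N. c i * (norm (Dy i))^2)"
        by (simp add: sum.distrib sum_subtractf sum_distrib_left)
      finally show ?thesis .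
    qed
    have T1: "(\<Sum>i\<in>vset N. ATlam E (lam j) i \<bullet> dx i) = (\<Sum>e\<in>E. lam j e \<bullet> Ablk (Wc (Suc j)) e)"
      unfolding ATlam_sum[OF graph]
      by (intro sum.cong) (auto simp: dx_def Ablk_def xs_eq)
    have T2a: "(\<Sum>i\<in>vset N. R i \<bullet> dx i) = (\<Sum>e\<in>E. (Wc (Suc j) (fst e) - Wc j (snd e)) \<bullet> dx (fst e))
        + (\<Sum>e\<in>E. (Wc (Suc j) (snd e) - Wc j (fst e)) \<bullet> dx (snd e))"
    proof -
      have A: "(\<Sum>i\<in>vset N. \<Sum>e\<in>{e\<in>E. fst e = i}. (Wc (Suc j) i - Wc j (snd e)) \<bullet> dx i)
          = (\<Sum>e\<in>E. (Wc (Suc j) (fst e) - Wc j (snd e)) \<bullet> dx (fst e))" by (rule swap_fst[OF graph])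
      have B: "(\<Sum>i\<in>vset N. \<Sum>e\<in>{e\<in>E. snd e = i}. (Wc (Suc j) i - Wc j (fst e)) \<bullet> dx i)
          = (\<Sum>e\<in>E. (Wc (Suc j) (snd e) - Wc j (fst e)) \<bullet> dx (snd e))" by (rule swap_snd[OF graph])
      show ?thesis unfolding R_def inner_add_left inner_sum_left sum.distrib A B ..
    qed
    have T2b: "(Wc (Suc j) (fst e) - Wc j (snd e)) \<bullet> dx (fst e) + (Wc (Suc j) (snd e) - Wc j (fst e)) \<bullet> dx (snd e)
        = (norm (Ablk (Wc (Suc j)) e))^2 - (wx (fst e) \<bullet> wx (snd e) - dx (fst e) \<bullet> dx (snd e) - Dx (fst e) \<bullet> Dx (snd e))"
      if e: "e \<in> E" for e
      unfolding dx_def wx_def Dx_def Ablk_def xs_eq[OF e] by (rule edge_id)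
    have T2: "(\<Sum>i\<in>vset N. R i \<bullet> dx i) = (\<Sum>e\<in>E. (norm (Ablk (Wc (Suc j)) e))^2)
        - (\<Sum>e\<in>E. wx (fst e) \<bullet> wx (snd e)) + (\<Sum>e\<in>E. dx (fst e) \<bullet> dx (snd e)) + (\<Sum>e\<in>E. Dx (fst e) \<bullet> Dx (snd e))"
    proof -
      have "(\<Sum>i\<in>vset N. R i \<bullet> dx i) = (\<Sum>e\<in>E. (norm (Ablk (Wc (Suc j)) e))^2 - (wx (fst e) \<bullet> wx (snd e) - dx (fst e) \<bullet> dx (snd e) - Dx (fst e) \<bullet> Dx (snd e)))"
        unfolding T2a sum.distrib[symmetric] by (rule sum.cong[OF refl T2b])
      then show ?thesis by (simp add: sum_subtractf sum.distrib)
    qed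
    have T3: "(\<Sum>i\<in>vset N. (P i *v Dx i) \<bullet> dx i) = 1/2 * ((\<Sum>i\<in>vset N. wnorm2 (dx i) (P i)) + (\<Sum>i\<in>vset N. wnorm2 (Dx i) (P i)) - (\<Sum>i\<in>vset N. wnorm2 (wx i) (P i)))"
    proof -
      have "(\<Sum>i\<in>vset N. (P i *v Dx i) \<bullet> dx i) = (\<Sum>i\<in>vset N. 1/2 * (wnorm2 (dx i) (P i) + wnorm2 (Dx i) (P i) - wnorm2 (wx i) (P i)))"
        unfolding dx_def Dx_def wx_def by (intro sum.cong refl polar Psym)
      then show ?thesis by (simp only: sum_distrib_left[symmetric] sum.distrib sum_subtractf)
    qed
    have T4: "(\<Sum>i\<in>vset N. (Q i *v Dy i) \<bullet> dy i) = 1/2 * (G2_qf N Q dy + G2_qf N Q Dy - G2_qf N Q wy)"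
    proof -
      have "(\<Sum>i\<in>vset N. (Q i *v Dy i) \<bullet> dy i) = (\<Sum>i\<in>vset N. 1/2 * (wnorm2 (dy i) (Q i) + wnorm2 (Dy i) (Q i) - wnorm2 (wy i) (Q i)))"
        unfolding dy_def Dy_def wy_def by (intro sum.cong refl polar Qsym)
      then show ?thesis unfolding G2_qf_def by (simp only: sum_distrib_left[symmetric] sum.distrib sum_subtractf)
    qed
    have T5: "(\<Sum>i\<in>vset N. c i * (norm (Dy i))^2) = 1/2 * G3_qf N C m Dy"
      unfolding G3_qf_def c_def sum_distrib_left by (rule sum.cong) (auto simp: field_simps)
    have g1w: "G1dag_qf N E rho P wx = (\<Sum>i\<in>vset N. wnorm2 (wx i) (P i)) + 2 * (rho * (\<Sum>e\<in>E. wx (fst e) \<bullet> wx (snd e)))"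
      unfolding G1dag_alt[OF graph] by (simp add: sum_distrib_left[symmetric])
    have g1d: "G1dag_qf N E rho P dx = (\<Sum>i\<in>vset N. wnorm2 (dx i) (P i)) + 2 * (rho * (\<Sum>e\<in>E. dx (fst e) \<bullet> dx (snd e)))"
      unfolding G1dag_alt[OF graph] by (simp add: sum_distrib_left[symmetric])
    have g1D: "G1dag_qf N E rho P Dx = (\<Sum>i\<in>vset N. wnorm2 (Dx i) (P i)) + 2 * (rho * (\<Sum>e\<in>E. Dx (fst e) \<bullet> Dx (snd e)))"
      unfolding G1dag_alt[OF graph] by (simp add: sum_distrib_left[symmetric])
    have dual: "(\<Sum>e\<in>E. lam j e \<bullet> Ablk (Wc (Suc j)) e) - rho * (\<Sum>e\<in>E. (norm (Ablk (Wc (Suc j)) e))^2)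
        \<le> ((\<Sum>e\<in>E. (norm (lam j e))^2) - (\<Sum>e\<in>E. (norm (lam (Suc j) e))^2)) / (2 * gamma * rho)"
    proof -
      have "(\<Sum>e\<in>E. lam j e \<bullet> Ablk (Wc (Suc j)) e) - rho * (\<Sum>e\<in>E. (norm (Ablk (Wc (Suc j)) e))^2)
          = (\<Sum>e\<in>E. lam j e \<bullet> Ablk (Wc (Suc j)) e - rho * (norm (Ablk (Wc (Suc j)) e))^2)"
        by (simp add: sum_subtractf sum_distrib_left)
      also have "\<dots> \<le> (\<Sum>e\<in>E. ((norm (lam j e))^2 - (norm (lam (Suc j) e))^2) / (2 * gamma * rho))"
      proof (rule sum_mono)
        fix e assume e: "e \<in> E"
        show "lam j e \<bullet> Ablk (Wc (Suc j)) e - rho * (norm (Ablk (Wc (Suc j)) e))^2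
            \<le> ((norm (lam j e))^2 - (norm (lam (Suc j) e))^2) / (2 * gamma * rho)"
          unfolding step2[OF e] by (rule dual_edge[OF gamma rho])
      qed
      also have "\<dots> = ((\<Sum>e\<in>E. (norm (lam j e))^2) - (\<Sum>e\<in>E. (norm (lam (Suc j) e))^2)) / (2 * gamma * rho)"
        by (simp only: sum_subtractf[symmetric] sum_divide_distrib)
      finally show ?thesis .
    qed
    have ps1: "G1dag_qf N E rho P Dx \<ge> 0" by (rule psd1)
    have ps2: "G2_qf N Q Dy - G3_qf N C m Dy \<ge> 0" by (rule psd23)
    have lamdiv: "((\<Sum>e\<in>E. (norm (lam j e))^2) - (\<Sum>e\<in>E. (norm (lam (Suc j) e))^2)) / (2 * gamma * rho)
        = ((\<Sum>e\<in>E. (norm (lam j e))^2) / (gamma * rho) - (\<Sum>e\<in>E. (norm (lam (Suc j) e))^2) / (gamma * rho)) / 2"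
      by (simp add: diff_divide_distrib mult.commute mult.left_commute)
    have PhiJ: "Phi j = G1dag_qf N E rho P wx + G2_qf N Q wy + (\<Sum>e\<in>E. (norm (lam j e))^2) / (gamma * rho)"
      unfolding Phi_def wx_def wy_def ..
    have PhiS: "Phi (Suc j) = G1dag_qf N E rho P dx + G2_qf N Q dy + (\<Sum>e\<in>E. (norm (lam (Suc j) e))^2) / (gamma * rho)"
      unfolding Phi_def dx_def dy_def ..
    have rT2: "rho * (\<Sum>i\<in>vset N. R i \<bullet> dx i) = rho * (\<Sum>e\<in>E. (norm (Ablk (Wc (Suc j)) e))^2)
        - rho * (\<Sum>e\<in>E. wx (fst e) \<bullet> wx (snd e)) + rho * (\<Sum>e\<in>E. dx (fst e) \<bullet> dx (snd e)) + rho * (\<Sum>e\<in>E. Dx (fst e) \<bullet> Dx (snd e))"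
      unfolding T2 by (simp add: algebra_simps)
    have X1: "Ftot N mu1 mu2 f (Wc (Suc j)) (Wh (Suc j)) - Ftot N mu1 mu2 f Wcs Whs \<le>
       ((\<Sum>e\<in>E. lam j e \<bullet> Ablk (Wc (Suc j)) e) - rho * (\<Sum>e\<in>E. (norm (Ablk (Wc (Suc j)) e))^2))
       + rho * (\<Sum>e\<in>E. wx (fst e) \<bullet> wx (snd e)) - rho * (\<Sum>e\<in>E. dx (fst e) \<bullet> dx (snd e)) - rho * (\<Sum>e\<in>E. Dx (fst e) \<bullet> Dx (snd e))
       - 1/2 * ((\<Sum>i\<in>vset N. wnorm2 (dx i) (P i)) + (\<Sum>i\<in>vset N. wnorm2 (Dx i) (P i)) - (\<Sum>i\<in>vset N. wnorm2 (wx i) (P i)))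
       - 1/2 * (G2_qf N Q dy + G2_qf N Q Dy - G2_qf N Q wy) + 1/2 * G3_qf N C m Dy"
      using sumB T1 rT2 T3 T4 T5 by linarith
    have X2: "Ftot N mu1 mu2 f (Wc (Suc j)) (Wh (Suc j)) - Ftot N mu1 mu2 f Wcs Whs \<le>
       ((\<Sum>e\<in>E. lam j e \<bullet> Ablk (Wc (Suc j)) e) - rho * (\<Sum>e\<in>E. (norm (Ablk (Wc (Suc j)) e))^2))
       + 1/2 * (G1dag_qf N E rho P wx - G1dag_qf N E rho P dx - G1dag_qf N E rho P Dx)
       + 1/2 * (G2_qf N Q wy - G2_qf N Q dy) - 1/2 * (G2_qf N Q Dy - G3_qf N C m Dy)"
    proof -
      have "1/2 * (G1dag_qf N E rho P wx - G1dag_qf N E rho P dx - G1dag_qf N E rho P Dx)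
         = rho * (\<Sum>e\<in>E. wx (fst e) \<bullet> wx (snd e)) - rho * (\<Sum>e\<in>E. dx (fst e) \<bullet> dx (snd e)) - rho * (\<Sum>e\<in>E. Dx (fst e) \<bullet> Dx (snd e))
       - 1/2 * ((\<Sum>i\<in>vset N. wnorm2 (dx i) (P i)) + (\<Sum>i\<in>vset N. wnorm2 (Dx i) (P i)) - (\<Sum>i\<in>vset N. wnorm2 (wx i) (P i)))"
        unfolding g1w g1d g1D by (simp add: algebra_simps)
      moreover have "1/2 * (G2_qf N Q wy - G2_qf N Q dy) - 1/2 * (G2_qf N Q Dy - G3_qf N C m Dy)
         = - 1/2 * (G2_qf N Q dy + G2_qf N Q Dy - G2_qf N Q wy) + 1/2 * G3_qf N C m Dy"
        by (simp add: algebra_simps)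
      ultimately show ?thesis using X1 by linarith
    qed
    show ?thesis
    proof -
      have "(Phi j - Phi (Suc j)) / 2 = 1/2 * (G1dag_qf N E rho P wx - G1dag_qf N E rho P dx) + 1/2 * (G2_qf N Q wy - G2_qf N Q dy)
         + ((\<Sum>e\<in>E. (norm (lam j e))^2) - (\<Sum>e\<in>E. (norm (lam (Suc j) e))^2)) / (2 * gamma * rho)"
        unfolding lamdiv PhiJ PhiS by (rule lin_id)
      then show ?thesis by (rule comb[OF _ X2 dual ps1 ps2])
    qed
  qed
  have tele: "(\<Sum>j<k. Ftot N mu1 mu2 f (Wc (Suc j)) (Wh (Suc j)) - Ftot N mu1 mu2 f Wcs Whs) \<le> (Phi 0 - Phi k) / 2"
  proof -
    have "(\<Sum>j<k. Ftot N mu1 mu2 f (Wc (Suc j)) (Wh (Suc j)) - Ftot N mu1 mu2 f Wcs Whs) \<le> (\<Sum>j<k. (Phi j - Phi (Suc j)) / 2)"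
      by (rule sum_mono[OF step])
    also have "\<dots> = (\<Sum>j<k. Phi j - Phi (Suc j)) / 2" by (simp add: sum_divide_distrib)
    also have "\<dots> = (Phi 0 - Phi k) / 2" by (simp add: sum_lessThan_telescope')
    finally show ?thesis .
  qed
  have avg: "Ftot N mu1 mu2 f (\<lambda>i. (1 / real k) *\<^sub>R (\<Sum>j=1..k. Wc j i)) (\<lambda>i. (1 / real k) *\<^sub>R (\<Sum>j=1..k. Wh j i))
     \<le> (1 / real k) * (\<Sum>j=1..k. Ftot N mu1 mu2 f (Wc j) (Wh j))"
    by (rule Ftot_avg[OF cvx diff mu1 less_imp_le[OF mu2] k1])
  have re: "(\<Sum>j=1..k. Ftot N mu1 mu2 f (Wc j) (Wh j)) = (\<Sum>j<k. Ftot N mu1 mu2 f (Wc (Suc j)) (Wh (Suc j)))"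
    by (simp add: sum.atLeast1_atMost_eq)
  have kpos: "real k > 0" using k1 by simp
  have "(\<Sum>j<k. Ftot N mu1 mu2 f (Wc (Suc j)) (Wh (Suc j)) - Ftot N mu1 mu2 f Wcs Whs)
      = (\<Sum>j<k. Ftot N mu1 mu2 f (Wc (Suc j)) (Wh (Suc j))) - real k * Ftot N mu1 mu2 f Wcs Whs"
    by (simp add: sum_subtractf)
  then have "(\<Sum>j<k. Ftot N mu1 mu2 f (Wc (Suc j)) (Wh (Suc j))) - real k * Ftot N mu1 mu2 f Wcs Whs \<le> Phi 0 / 2"
    by (rule fin1[OF tele Phi_nn[of k]])
  then have "(1 / real k) * (\<Sum>j<k. Ftot N mu1 mu2 f (Wc (Suc j)) (Wh (Suc j))) - Ftot N mu1 mu2 f Wcs Whs \<le> Phi 0 / (2 * real k)"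
    by (rule fin3[OF kpos])
  moreover have "1 / (2 * real k) * (G1dag_qf N E rho P (\<lambda>i. Wc 0 i - Wcs i) + G2_qf N Q (\<lambda>i. Wh 0 i - Whs i)) = Phi 0 / (2 * real k)"
    by (simp add: Phi0)
  ultimately show ?thesis by (rule fin2[OF avg[unfolded re]])
qed

end
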